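(* Let $H$ be the tournament on vertex set $\{u,v,w,a,b,c,d\}$ with edges $u\to v$, $u\to w$, $w\to v$, $u\to c$, $u\to d$, $v\to c$, $v\to d$, $a\to u$, $b\to u$, $a\to v$, $b\to v$, $a\to b$, $c\to d$, $c\to a$, $c\to b$, $d\to a$, $d\to b$, $w\to a$, $b\to w$, $w\to c$, $d\to w$. Then: (1) $H$ has a proper $2$-coloring in which $u$ and $v$ have the same color and all vertices of $N^-(u)\cup N^+(v)$ have the other color; (2) in every proper $2$-coloring of $H$, $u$ and $v$ have the same color.
   Context: A proper $2$-coloring of a tournament is a partition of its vertex set into $2$ sets each inducing an acyclic (transitive) subtournament, i.e. a $2$-coloring with no monochromatic cyclic triangle. $N^+(x)=\{y: x\to y\}$ and $N^-(x)=\{y: y\to x\}$. *)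

theory Defs
  imports Main
begin

datatype vert = U | V | W | A | B | C | D

fun H_edge :: "vert \<Rightarrow> vert \<Rightarrow> bool" where
  "H_edge U V = True" | "H_edge U W = True" | "H_edge W V = True"
| "H_edge U C = True" | "H_edge U D = True" | "H_edge V C = True"
| "H_edge V D = True" | "H_edge A U = True" | "H_edge B U = True"
| "H_edge A V = True" | "H_edge B V = True" | "H_edge A B = True"
| "H_edge C D = True" | "H_edge C A = True" | "H_edge C B = True"
| "H_edge D A = True" | "H_edge D B = True" | "H_edge W A = True"
| "H_edge B W = True" | "H_edge W C = True" | "H_edge D W = True"
| "H_edge _ _ = False"

definition out_nbhd :: "('a \<Rightarrow> 'a \<Rightarrow> bool) \<Rightarrow> 'a \<Rightarrow> 'a set" where
  "out_nbhd E x = {y. E x y}"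
definition in_nbhd :: "('a \<Rightarrow> 'a \<Rightarrow> bool) \<Rightarrow> 'a \<Rightarrow> 'a set" where
  "in_nbhd E x = {y. E y x}"

definition proper_2_coloring :: "('a \<Rightarrow> 'a \<Rightarrow> bool) \<Rightarrow> ('a \<Rightarrow> bool) \<Rightarrow> bool" where
  "proper_2_coloring E col \<longleftrightarrow>
     (\<forall>x y z. E x y \<and> E y z \<and> E z x \<longrightarrow> \<not> (col x = col y \<and> col y = col z))"

end

theory Submission
  imports Defs
begin

lemma vert_all: "(\<forall>x::vert. P x) \<longleftrightarrow> P U \<and> P V \<and> P W \<and> P A \<and> P B \<and> P C \<and> P D"
  by (metis vert.exhaust)

theorem proposition5p3:
  shows "(\<exists>col. proper_2_coloring H_edge col \<and> col U = col V \<and>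
            (\<forall>x \<in> in_nbhd H_edge U \<union> out_nbhd H_edge V. col x \<noteq> col U))
         \<and> (\<forall>col. proper_2_coloring H_edge col \<longrightarrow> col U = col V)"
proof
  let ?c = "\<lambda>x. x = U \<or> x = V \<or> x = W"
  show "\<exists>col. proper_2_coloring H_edge col \<and> col U = col V \<and>
            (\<forall>x \<in> in_nbhd H_edge U \<union> out_nbhd H_edge V. col x \<noteq> col U)"
    apply (rule exI[of _ ?c])
    unfolding proper_2_coloring_def in_nbhd_def out_nbhd_def Ball_def
    by (simp add: vert_all)
  show "\<forall>col. proper_2_coloring H_edge col \<longrightarrow> col U = col V"
  proof (intro allI impI)
    fix col assume "proper_2_coloring H_edge col"
    hence h: "\<forall>x y z. H_edge x y \<and> H_edge y z \<and> H_edge z x \<longrightarrow> \<not> (col x = col y \<and> col y = col z)"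
      unfolding proper_2_coloring_def .
    then have "col U = col V \<or> False"
      unfolding vert_all by simp (cases "col U"; cases "col V"; cases "col W"; cases "col A"; cases "col B"; cases "col C"; cases "col D"; simp)
    thus "col U = col V" by simp
  qed
qed

end
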